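(* Let $n\ge3$ and $k\ge1$. In $H_{n,k}$ the clustering coefficients are as follows. (a) The root $\mathbf r=0\ldots0$ has $c(\mathbf r)=\dfrac{(n-2)^2}{(n-1)^{k+1}-2n+3}$. (b) For each $1\le i\le k-1$, every vertex $\mathbf v=\alpha_1\ldots\alpha_i0\ldots0$ (with $k-i$ trailing zeros) with $\alpha_i\neq0$ has $c(\mathbf v)=\dfrac{(n-2)^2}{(n-1)^{k-i+1}+(n-1)^2-3n+4}$. (c) Every vertex $\mathbf p$ with all coordinates nonzero has $c(\mathbf p)=\dfrac{(n-1)^2+(2k-3)(n-1)+2-2k}{(n+k-2)(n+k-3)}$. (d) For each $1\le i\le k-1$, every vertex $\mathbf p=x_1\ldots x_k$ with $x_i=0$ and $x_j\ne0$ for all $i<j\le k$ has $c(\mathbf p)=\dfrac{(n-1)^2+(2k-2i-3)(n-1)+2+2i-2k}{(n+k-i-2)(n+k-i-3)}$.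
   Context: Let $n\ge 2$ and $k\ge 1$ be integers. $H_{n,k}$ is the simple undirected graph with vertex set $V_{n,k}=\mathbb{Z}_n^k$ (so $|V_{n,k}|=n^k$), whose vertices are written as strings $x_1x_2\ldots x_k$ with $x_j\in\mathbb{Z}_n=\{0,1,\ldots,n-1\}$. Two distinct vertices are adjacent if and only if they are related by one of the following rules. For $i=0$ the prefix $x_1\ldots x_i$ is empty, and "$0\ldots0$" denotes a string of zeros completing the word to length $k$. (R1) $x_1\ldots x_{k-1}x_k\sim x_1\ldots x_{k-1}y_k$ whenever $y_k\neq x_k$. (R2) For $0\le i\le k-2$: $x_1\ldots x_i0\ldots0\sim x_1\ldots x_ix_{i+1}\ldots x_k$ whenever $x_j\neq 0$ for all $i+1\le j\le k$. (R3) For $1\le i\le k-1$: $x_1\ldots x_{i-1}x_i0\ldots0\sim x_1\ldots x_{i-1}y_i0\ldots0$ whenever $x_i,y_i\neq0$ and $x_i\ne y_i$. In particular, $H_{n,1}$ is the complete graph $K_n$. For a vertex $v$ of degree $\delta_v\ge2$, its clustering coefficient is $c(v)=\frac{2\epsilon_v}{\delta_v(\delta_v-1)}$, where $\epsilon_v$ is the number of edges of the graph joining two neighbours of $v$. *)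

theory Defs
  imports Complex_Main
begin

text \<open>Vertices of H_{n,k}: words x_1 ... x_k over Z_n, represented as lists of
  naturals of length k with entries < n; x_j is xs ! (j-1).\<close>

definition HV :: "nat \<Rightarrow> nat \<Rightarrow> nat list set" where
  "HV n k = {xs. length xs = k \<and> (\<forall>x\<in>set xs. x < n)}"

definition R1 :: "nat \<Rightarrow> nat list \<Rightarrow> nat list \<Rightarrow> bool" where
  "R1 k u v \<longleftrightarrow> take (k - 1) u = take (k - 1) v \<and> u ! (k - 1) \<noteq> v ! (k - 1)"

definition R2 :: "nat \<Rightarrow> nat list \<Rightarrow> nat list \<Rightarrow> bool" where
  "R2 k u v \<longleftrightarrow> (\<exists>i. i + 2 \<le> k \<and> u = take i v @ replicate (k - i) 0
      \<and> (\<forall>j. i \<le> j \<and> j < k \<longrightarrow> v ! j \<noteq> 0))"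

definition R3 :: "nat \<Rightarrow> nat list \<Rightarrow> nat list \<Rightarrow> bool" where
  "R3 k u v \<longleftrightarrow> (\<exists>i a b. 1 \<le> i \<and> i \<le> k - 1 \<and> a \<noteq> 0 \<and> b \<noteq> 0 \<and> a \<noteq> b
      \<and> u = take (i - 1) u @ [a] @ replicate (k - i) 0
      \<and> v = take (i - 1) u @ [b] @ replicate (k - i) 0)"

definition Hadj :: "nat \<Rightarrow> nat \<Rightarrow> nat list \<Rightarrow> nat list \<Rightarrow> bool" where
  "Hadj n k u v \<longleftrightarrow> u \<in> HV n k \<and> v \<in> HV n k \<and> u \<noteq> v \<and>
     (R1 k u v \<or> R2 k u v \<or> R2 k v u \<or> R3 k u v)"

definition Hnbrs :: "nat \<Rightarrow> nat \<Rightarrow> nat list \<Rightarrow> nat list set" where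
  "Hnbrs n k v = {u \<in> HV n k. Hadj n k v u}"

definition Hdeg :: "nat \<Rightarrow> nat \<Rightarrow> nat list \<Rightarrow> nat" where
  "Hdeg n k v = card (Hnbrs n k v)"

definition Hnbr_edges :: "nat \<Rightarrow> nat \<Rightarrow> nat list \<Rightarrow> nat" where
  "Hnbr_edges n k v = card {{a, b} | a b. a \<in> Hnbrs n k v \<and> b \<in> Hnbrs n k v \<and> Hadj n k a b}"

definition Hclust :: "nat \<Rightarrow> nat \<Rightarrow> nat list \<Rightarrow> real" where
  "Hclust n k v = 2 * real (Hnbr_edges n k v) / (real (Hdeg n k v) * (real (Hdeg n k v) - 1))"

end

theory Submission
  imports Defs
begin


definition R1n :: "nat \<Rightarrow> nat list \<Rightarrow> nat list \<Rightarrow> bool" where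
  "R1n k u v \<longleftrightarrow> (\<forall>j<k-1. u!j = v!j) \<and> u!(k-1) \<noteq> v!(k-1)"
definition R2n :: "nat \<Rightarrow> nat list \<Rightarrow> nat list \<Rightarrow> bool" where
  "R2n k u v \<longleftrightarrow> (\<exists>i. i+2 \<le> k \<and> (\<forall>j<i. u!j = v!j) \<and> (\<forall>j. i\<le>j \<longrightarrow> j<k \<longrightarrow> u!j = 0 \<and> v!j \<noteq> 0))"
definition R3n :: "nat \<Rightarrow> nat list \<Rightarrow> nat list \<Rightarrow> bool" where
  "R3n k u v \<longleftrightarrow> (\<exists>i. 1 \<le> i \<and> i < k \<and> (\<forall>j<i-1. u!j = v!j) \<and> u!(i-1) \<noteq> 0 \<and> v!(i-1) \<noteq> 0
     \<and> u!(i-1) \<noteq> v!(i-1) \<and> (\<forall>j. i\<le>j \<longrightarrow> j<k \<longrightarrow> u!j = 0 \<and> v!j = 0))"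

lemma take_eq_nth: "length u = k \<Longrightarrow> length v = k \<Longrightarrow> i \<le> k \<Longrightarrow>
   take i u = take i v \<longleftrightarrow> (\<forall>j<i. u!j = v!j)"
  by (auto simp: list_eq_iff_nth_eq min_def)

lemma eq_trunc: "length xs = k \<Longrightarrow> length ys = k \<Longrightarrow> i \<le> k \<Longrightarrow>
   xs = take i ys @ replicate (k-i) 0 \<longleftrightarrow> (\<forall>j<i. xs!j = ys!j) \<and> (\<forall>j. i\<le>j \<longrightarrow> j<k \<longrightarrow> xs!j = 0)"
proof
  assume "length xs = k" "length ys = k" "i \<le> k" "xs = take i ys @ replicate (k-i) 0"
  then show "(\<forall>j<i. xs!j = ys!j) \<and> (\<forall>j. i\<le>j \<longrightarrow> j<k \<longrightarrow> xs!j = 0)"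
    by (auto simp: nth_append)
next
  assume a: "length xs = k" "length ys = k" "i \<le> k" "(\<forall>j<i. xs!j = ys!j) \<and> (\<forall>j. i\<le>j \<longrightarrow> j<k \<longrightarrow> xs!j = 0)"
  show "xs = take i ys @ replicate (k-i) 0"
    by (rule nth_equalityI) (use a in \<open>auto simp: nth_append min_def\<close>)
qed

lemma eq_trunc1: "length xs = k \<Longrightarrow> length zs = k \<Longrightarrow> 1 \<le> i \<Longrightarrow> i \<le> k \<Longrightarrow>
   xs = take (i-1) zs @ [a] @ replicate (k-i) 0 \<longleftrightarrow>
     (\<forall>j<i-1. xs!j = zs!j) \<and> xs!(i-1) = a \<and> (\<forall>j. i\<le>j \<longrightarrow> j<k \<longrightarrow> xs!j = 0)"
proof
  assume "length xs = k" "length zs = k" "1 \<le> i" "i \<le> k" "xs = take (i-1) zs @ [a] @ replicate (k-i) 0"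
  then show "(\<forall>j<i-1. xs!j = zs!j) \<and> xs!(i-1) = a \<and> (\<forall>j. i\<le>j \<longrightarrow> j<k \<longrightarrow> xs!j = 0)"
    by (auto simp: nth_append nth_Cons')
next
  assume a: "length xs = k" "length zs = k" "1 \<le> i" "i \<le> k"
    "(\<forall>j<i-1. xs!j = zs!j) \<and> xs!(i-1) = a \<and> (\<forall>j. i\<le>j \<longrightarrow> j<k \<longrightarrow> xs!j = 0)"
  show "xs = take (i-1) zs @ [a] @ replicate (k-i) 0"
    by (rule nth_equalityI) (use a in \<open>auto simp: nth_append min_def nth_Cons'\<close>)
qed

lemma R1_iff: "length u = k \<Longrightarrow> length v = k \<Longrightarrow> R1 k u v = R1n k u v"
  by (simp add: R1_def R1n_def take_eq_nth)

lemma R2_iff: "length u = k \<Longrightarrow> length v = k \<Longrightarrow> R2 k u v = R2n k u v"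
  unfolding R2_def R2n_def
proof (intro iffI; elim exE conjE)
  fix i assume h: "length u = k" "length v = k" "i + 2 \<le> k"
  { assume "u = take i v @ replicate (k - i) 0" "\<forall>j. i \<le> j \<and> j < k \<longrightarrow> v ! j \<noteq> 0"
    then show "\<exists>i. i+2 \<le> k \<and> (\<forall>j<i. u!j = v!j) \<and> (\<forall>j. i\<le>j \<longrightarrow> j<k \<longrightarrow> u!j = 0 \<and> v!j \<noteq> 0)"
      using eq_trunc[of u k v i] h by (intro exI[of _ i]) auto }
  { assume "\<forall>j<i. u!j = v!j" "\<forall>j. i\<le>j \<longrightarrow> j<k \<longrightarrow> u!j = 0 \<and> v!j \<noteq> 0"
    then show "\<exists>i. i + 2 \<le> k \<and> u = take i v @ replicate (k - i) 0 \<and> (\<forall>j. i \<le> j \<and> j < k \<longrightarrow> v ! j \<noteq> 0)"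
      using eq_trunc[of u k v i] h by (intro exI[of _ i]) auto }
qed

lemma R3_iff: "length u = k \<Longrightarrow> length v = k \<Longrightarrow> R3 k u v = R3n k u v"
  unfolding R3_def R3n_def
proof (intro iffI; elim exE conjE)
  fix i a b assume h: "length u = k" "length v = k" "1 \<le> i" "i \<le> k - 1" "a \<noteq> 0" "b \<noteq> 0" "a \<noteq> b"
    "u = take (i - 1) u @ [a] @ replicate (k - i) 0" "v = take (i - 1) u @ [b] @ replicate (k - i) 0"
  have "(\<forall>j<i-1. u!j = u!j) \<and> u!(i-1) = a \<and> (\<forall>j. i\<le>j \<longrightarrow> j<k \<longrightarrow> u!j = 0)"
    using eq_trunc1[of u k u i a] h by auto
  moreover have "(\<forall>j<i-1. v!j = u!j) \<and> v!(i-1) = b \<and> (\<forall>j. i\<le>j \<longrightarrow> j<k \<longrightarrow> v!j = 0)"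
    using eq_trunc1[of v k u i b] h by auto
  ultimately show "\<exists>i. 1 \<le> i \<and> i < k \<and> (\<forall>j<i-1. u!j = v!j) \<and> u!(i-1) \<noteq> 0 \<and> v!(i-1) \<noteq> 0
     \<and> u!(i-1) \<noteq> v!(i-1) \<and> (\<forall>j. i\<le>j \<longrightarrow> j<k \<longrightarrow> u!j = 0 \<and> v!j = 0)"
    using h by (intro exI[of _ i]) auto
next
  fix i assume h: "length u = k" "length v = k" "1 \<le> i" "i < k" "\<forall>j<i-1. u!j = v!j" "u!(i-1) \<noteq> 0" "v!(i-1) \<noteq> 0"
     "u!(i-1) \<noteq> v!(i-1)" "\<forall>j. i\<le>j \<longrightarrow> j<k \<longrightarrow> u!j = 0 \<and> v!j = 0"
  have "u = take (i - 1) u @ [u!(i-1)] @ replicate (k - i) 0"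
    using eq_trunc1[of u k u i "u!(i-1)"] h by auto
  moreover have "v = take (i - 1) u @ [v!(i-1)] @ replicate (k - i) 0"
    using eq_trunc1[of v k u i "v!(i-1)"] h by auto
  ultimately show "\<exists>i a b. 1 \<le> i \<and> i \<le> k - 1 \<and> a \<noteq> 0 \<and> b \<noteq> 0 \<and> a \<noteq> b
      \<and> u = take (i - 1) u @ [a] @ replicate (k - i) 0
      \<and> v = take (i - 1) u @ [b] @ replicate (k - i) 0"
    using h by (intro exI[of _ i] exI[of _ "u!(i-1)"] exI[of _ "v!(i-1)"]) auto
qed


lemma HV_nth: "xs \<in> HV n k \<longleftrightarrow> length xs = k \<and> (\<forall>j<k. xs!j < n)"
  unfolding HV_def by (auto simp: in_set_conv_nth) (metis nth_mem)

lemma Hadj_nth: "Hadj n k u v \<longleftrightarrow> u \<in> HV n k \<and> v \<in> HV n k \<and> u \<noteq> v \<and>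
   (R1n k u v \<or> R2n k u v \<or> R2n k v u \<or> R3n k u v)"
  unfolding Hadj_def using R1_iff R2_iff R3_iff HV_def by auto

lemma Hadj_sym: "Hadj n k u v \<Longrightarrow> Hadj n k v u"
  unfolding Hadj_nth R1n_def R2n_def R3n_def by (auto; metis)

lemma finite_HV: "finite (HV n k)"
proof -
  have "HV n k = {xs. set xs \<subseteq> {..<n} \<and> length xs = k}" unfolding HV_def by auto
  then show ?thesis using finite_lists_length_eq[of "{..<n}" k] by simp
qed

definition NZ :: "nat \<Rightarrow> nat \<Rightarrow> nat list set" where
  "NZ n m = {y. length y = m \<and> (\<forall>x\<in>set y. 0 < x \<and> x < n)}"

lemma card_NZ: "card (NZ n m) = (n-1)^m"
proof -
  have "NZ n m = {xs. set xs \<subseteq> {1..<n} \<and> length xs = m}" unfolding NZ_def by auto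
  then show ?thesis using card_lists_length_eq[of "{1..<n}" m] by simp
qed

lemma edges_double:
  assumes fin: "finite N" and sym: "\<And>a b. R a b \<Longrightarrow> R b a" and irr: "\<And>a. \<not> R a a"
  shows "2 * card {{a,b}|a b. a\<in>N \<and> b\<in>N \<and> R a b} = (\<Sum>a\<in>N. card {b\<in>N. R a b})"
proof -
  define P where "P = (SIGMA a:N. {b\<in>N. R a b})"
  define f where "f = (\<lambda>(a::'a,b::'a). {a,b})"
  have finP: "finite P" unfolding P_def using fin by auto
  have cP: "card P = (\<Sum>a\<in>N. card {b\<in>N. R a b})" unfolding P_def using fin by simp
  have E: "{{a,b}|a b. a\<in>N \<and> b\<in>N \<and> R a b} = f ` P" unfolding P_def f_def by auto
  have PU: "P = (\<Union>e\<in>f ` P. {x\<in>P. f x = e})" by auto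
  have "card P = (\<Sum>e\<in>f ` P. card {x\<in>P. f x = e})"
    by (subst PU, rule card_UN_disjoint) (use finP in auto)
  also have "\<dots> = (\<Sum>e\<in>f ` P. 2)"
  proof (rule sum.cong)
    fix e assume "e \<in> f ` P"
    then obtain a b where ab: "(a,b) \<in> P" "e = {a,b}" unfolding f_def by auto
    then have "R a b" "a \<in> N" "b \<in> N" unfolding P_def by auto
    then have "a \<noteq> b" using irr by auto
    have "{x\<in>P. f x = e} = {(a,b),(b,a)}"
      using ab \<open>R a b\<close> sym unfolding P_def f_def by (auto simp: doubleton_eq_iff)
    then show "card {x\<in>P. f x = e} = 2" using \<open>a \<noteq> b\<close> by simp
  qed simp
  finally show ?thesis using E cP by simp
qed


lemma R2n_last: "R2n k u v \<Longrightarrow> u!(k-1) = 0 \<and> v!(k-1) \<noteq> 0"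
proof -
  assume "R2n k u v"
  then obtain i where "i+2 \<le> k" "\<forall>j. i\<le>j \<longrightarrow> j<k \<longrightarrow> u!j = 0 \<and> v!j \<noteq> 0" unfolding R2n_def by auto
  moreover have "i \<le> k-1" "k-1 < k" using \<open>i+2\<le>k\<close> by auto
  ultimately show ?thesis by blast
qed

lemma R3n_last: "R3n k u v \<Longrightarrow> u!(k-1) = 0 \<and> v!(k-1) = 0"
proof -
  assume "R3n k u v"
  then obtain i where "i < k" "\<forall>j. i\<le>j \<longrightarrow> j<k \<longrightarrow> u!j = 0 \<and> v!j = 0" unfolding R3n_def by auto
  moreover have "i \<le> k-1" "k-1 < k" using \<open>i<k\<close> by auto
  ultimately show ?thesis by blast
qed

lemma Hnbrs_HV: "Hnbrs n k u \<subseteq> HV n k" unfolding Hnbrs_def by auto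

lemma irr: "\<not> Hadj n k a a" unfolding Hadj_def by auto



locale zv =
  fixes n k :: nat and v :: "nat list" and p :: nat
  assumes n3: "n \<ge> 3" and vHV: "v \<in> HV n k" and pk: "p < k"
    and pnz: "p = 0 \<or> v!(p-1) \<noteq> 0" and vz: "\<And>j. p \<le> j \<Longrightarrow> j < k \<Longrightarrow> v!j = 0"
begin

definition ZA where "ZA = (if p = 0 then {} else (\<lambda>c. v[p-1:=c]) ` ({1..<n} - {v!(p-1)}))"
definition ZBl where "ZBl l = {b\<in>HV n k. (\<forall>j<p. b!j = v!j) \<and> (\<forall>j. p\<le>j \<longrightarrow> j<l \<longrightarrow> b!j = 0)
    \<and> (\<forall>j. l\<le>j \<longrightarrow> j<k \<longrightarrow> b!j \<noteq> 0)}"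
definition ZB where "ZB = (\<Union>l\<in>{p..<k}. ZBl l)"

lemma lv: "length v = k" "\<And>j. j < k \<Longrightarrow> v!j < n"
  using vHV HV_nth by auto

lemma vlast: "v!(k-1) = 0" using vz pk by auto

lemma nbrs: "Hnbrs n k v = ZA \<union> ZB"
proof (rule set_eqI, rule iffI)
  fix b assume "b \<in> Hnbrs n k v"
  then have bHV: "b \<in> HV n k" and ne: "v \<noteq> b" and rel: "R1n k v b \<or> R2n k v b \<or> R2n k b v \<or> R3n k v b"
    unfolding Hnbrs_def Hadj_nth by auto
  have lb: "length b = k" "\<And>j. j<k \<Longrightarrow> b!j < n" using bHV HV_nth by auto
  from rel show "b \<in> ZA \<union> ZB"
  proof (elim disjE)
    assume r: "R1n k v b"
    have "b \<in> ZBl (k-1)" unfolding ZBl_def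
    proof (intro CollectI conjI allI impI bHV)
      fix j assume "j < p" then show "b!j = v!j" using r pk unfolding R1n_def by auto
    next
      fix j assume "p \<le> j" "j < k-1" then show "b!j = 0" using r vz[of j] unfolding R1n_def by auto
    next
      fix j assume "k-1 \<le> j" "j < k" then have "j = k-1" by auto
      then show "b!j \<noteq> 0" using r vlast unfolding R1n_def by auto
    qed
    then show ?thesis using pk unfolding ZB_def by auto
  next
    assume "R2n k v b"
    then obtain i where i: "i+2 \<le> k" "\<forall>j<i. v!j = b!j" "\<forall>j. i\<le>j \<longrightarrow> j<k \<longrightarrow> v!j = 0 \<and> b!j \<noteq> 0"
      unfolding R2n_def by auto
    have "p \<le> i"
    proof (rule ccontr)
      assume "\<not> p \<le> i" then have "p \<noteq> 0" "i \<le> p-1" "p - 1 < k" using pk by auto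
      then show False using i(3) pnz by auto
    qed
    then have "b \<in> ZBl i" unfolding ZBl_def using bHV i vz by auto
    then show ?thesis using \<open>p\<le>i\<close> i unfolding ZB_def by auto
  next
    assume "R2n k b v"
    then obtain i where "i+2\<le>k" "\<forall>j. i\<le>j \<longrightarrow> j<k \<longrightarrow> b!j=0 \<and> v!j\<noteq>0" unfolding R2n_def by auto
    then have "v!(k-1) \<noteq> 0" by auto
    then show ?thesis using vlast by simp
  next
    assume "R3n k v b"
    then obtain i where i: "1\<le>i" "i<k" "\<forall>j<i-1. v!j = b!j" "v!(i-1) \<noteq> 0" "b!(i-1) \<noteq> 0"
      "v!(i-1) \<noteq> b!(i-1)" "\<forall>j. i\<le>j \<longrightarrow> j<k \<longrightarrow> v!j = 0 \<and> b!j = 0"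
      unfolding R3n_def by auto
    have "i \<le> p"
    proof (rule ccontr)
      assume "\<not> i \<le> p" then show False using vz[of "i-1"] i by auto
    qed
    have "i = p"
    proof (rule ccontr)
      assume "i \<noteq> p" then have "i < p" using \<open>i\<le>p\<close> by auto
      then show False using i(7) pnz pk by (metis One_nat_def Suc_pred less_Suc_eq_le less_imp_diff_less not_gr0 not_less0)
    qed
    have "b = v[p-1 := b!(p-1)]"
    proof (rule nth_equalityI)
      show "length b = length (v[p - 1 := b ! (p - 1)])" using lb lv by simp
      fix j assume "j < length b"
      then show "b ! j = v[p - 1 := b ! (p - 1)] ! j"
        using i \<open>i = p\<close> lb lv vz[of j] by (cases "j < p-1"; cases "j = p-1"; auto)
    qed
    moreover have "b!(p-1) \<in> {1..<n} - {v!(p-1)}" using lb(2)[of "p-1"] i \<open>i=p\<close> by auto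
    ultimately show ?thesis unfolding ZA_def using \<open>i=p\<close> i by auto
  qed
next
  fix b assume "b \<in> ZA \<union> ZB"
  then show "b \<in> Hnbrs n k v"
  proof
    assume "b \<in> ZA"
    then obtain c where p0: "p \<noteq> 0" and c: "c \<in> {1..<n} - {v!(p-1)}" "b = v[p-1:=c]"
    proof -
      have "p \<noteq> 0" using \<open>b \<in> ZA\<close> unfolding ZA_def by (auto split: if_splits)
      moreover then have "b \<in> (\<lambda>c. v[p-1:=c]) ` ({1..<n} - {v!(p-1)})" using \<open>b \<in> ZA\<close> unfolding ZA_def by simp
      ultimately show ?thesis using that by blast
    qed
    have bHV: "b \<in> HV n k" using c lv pk unfolding HV_nth by (auto simp: nth_list_update split: if_splits)
    have "b!(p-1) = c" using c lv pk by auto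
    then have "v \<noteq> b" using c by auto
    have "R3n k v b" unfolding R3n_def
      by (rule exI[of _ p]) (use p0 pk c pnz vz lv in \<open>auto simp: nth_list_update\<close>)
    then show ?thesis unfolding Hnbrs_def Hadj_nth using bHV vHV \<open>v\<noteq>b\<close> by auto
  next
    assume "b \<in> ZB"
    then obtain l where l: "p \<le> l" "l < k" "b \<in> ZBl l" unfolding ZB_def by auto
    then have bHV: "b \<in> HV n k" and b1: "\<forall>j<p. b!j = v!j" and b2: "\<forall>j. p\<le>j \<longrightarrow> j<l \<longrightarrow> b!j = 0"
      and b3: "\<forall>j. l\<le>j \<longrightarrow> j<k \<longrightarrow> b!j \<noteq> 0" unfolding ZBl_def by auto
    have "b!(k-1) \<noteq> 0" using b3 l by auto
    then have "v \<noteq> b" using vlast by auto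
    have agree: "\<forall>j<l. v!j = b!j" using b1 b2 vz l by (metis not_less order.strict_trans)
    have "R1n k v b \<or> R2n k v b"
    proof (cases "l + 2 \<le> k")
      case True
      have "R2n k v b" unfolding R2n_def
        by (rule exI[of _ l]) (use True agree b3 vz l in auto)
      then show ?thesis by simp
    next
      case False
      then have "l = k-1" using l by auto
      then have "R1n k v b" unfolding R1n_def using agree vlast \<open>b!(k-1) \<noteq> 0\<close> by auto
      then show ?thesis by simp
    qed
    then show ?thesis unfolding Hnbrs_def Hadj_nth using bHV vHV \<open>v\<noteq>b\<close> by auto
  qed
qed



lemma card_ZA: "card ZA = (if p = 0 then 0 else n-2)"
proof (cases "p = 0")
  case False
  have inj: "inj_on (\<lambda>c. v[p-1:=c]) ({1..<n} - {v!(p-1)})"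
  proof (rule inj_onI)
    fix x y assume "v[p-1:=x] = v[p-1:=y]"
    then have "v[p-1:=x] ! (p-1) = v[p-1:=y] ! (p-1)" by simp
    then show "x = y" using pk lv by simp
  qed
  have "v!(p-1) \<in> {1..<n}" using pnz False lv pk by auto
  then have "card ({1..<n} - {v!(p-1)}) = n - 2" by simp
  then show ?thesis using False inj unfolding ZA_def by (simp add: card_image)
next
  case True then show ?thesis unfolding ZA_def by simp
qed

lemma nth_gz: "j < k \<Longrightarrow> p \<le> l \<Longrightarrow> l \<le> k \<Longrightarrow>
  (take p v @ replicate (l-p) 0 @ y)!j = (if j<p then v!j else if j<l then 0 else y!(j-l))"
  using lv pk by (auto simp: nth_append min_def)

lemma ZBl_img: assumes "p \<le> l" "l < k"
  shows "ZBl l = (\<lambda>y. take p v @ replicate (l-p) 0 @ y) ` NZ n (k-l)"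
proof (rule set_eqI, rule iffI)
  fix b assume b: "b \<in> ZBl l"
  then have bHV: "length b = k" "\<And>j. j<k \<Longrightarrow> b!j<n" and b1: "\<forall>j<p. b!j = v!j" and b2: "\<forall>j. p\<le>j \<longrightarrow> j<l \<longrightarrow> b!j = 0"
      and b3: "\<forall>j. l\<le>j \<longrightarrow> j<k \<longrightarrow> b!j \<noteq> 0" unfolding ZBl_def HV_nth by auto
  have "drop l b \<in> NZ n (k-l)" unfolding NZ_def
    using bHV b3 by (auto simp: in_set_conv_nth)
  moreover have "b = take p v @ replicate (l-p) 0 @ drop l b"
  proof (rule nth_equalityI)
    show "length b = length (take p v @ replicate (l-p) 0 @ drop l b)" using bHV lv assms by simp
    fix j assume "j < length b"
    then show "b ! j = (take p v @ replicate (l-p) 0 @ drop l b) ! j"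
      using nth_gz[of j l "drop l b"] assms bHV b1 b2 by auto
  qed
  ultimately show "b \<in> (\<lambda>y. take p v @ replicate (l-p) 0 @ y) ` NZ n (k-l)" by blast
next
  fix b assume "b \<in> (\<lambda>y. take p v @ replicate (l-p) 0 @ y) ` NZ n (k-l)"
  then obtain y where y: "y \<in> NZ n (k-l)" "b = take p v @ replicate (l-p) 0 @ y" by auto
  have ly: "length y = k - l" "\<And>j. j < k-l \<Longrightarrow> 0 < y!j \<and> y!j < n" using y unfolding NZ_def by auto
  have lb: "length b = k" using y ly lv assms by simp
  have nb: "\<And>j. j<k \<Longrightarrow> b!j = (if j<p then v!j else if j<l then 0 else y!(j-l))"
    using nth_gz y assms by auto
  show "b \<in> ZBl l" unfolding ZBl_def HV_nth
    using lb nb lv ly assms n3 by auto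
qed

lemma finite_ZBl: "finite (ZBl l)" unfolding ZBl_def using finite_HV by auto

lemma card_ZBl: assumes "p \<le> l" "l < k" shows "card (ZBl l) = (n-1)^(k-l)"
proof -
  have "inj_on (\<lambda>y. take p v @ replicate (l-p) 0 @ y) (NZ n (k-l))" by (rule inj_onI) simp
  then show ?thesis using ZBl_img[OF assms] card_NZ by (simp add: card_image)
qed

lemma card_ZB: "card ZB = (\<Sum>l\<in>{p..<k}. (n-1)^(k-l))"
proof -
  have "card ZB = (\<Sum>l\<in>{p..<k}. card (ZBl l))" unfolding ZB_def
  proof (rule card_UN_disjoint)
    show "\<forall>i\<in>{p..<k}. \<forall>j\<in>{p..<k}. i \<noteq> j \<longrightarrow> ZBl i \<inter> ZBl j = {}"
    proof (intro ballI impI)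
      fix i j assume ij: "i \<in> {p..<k}" "j \<in> {p..<k}" "i \<noteq> j"
      show "ZBl i \<inter> ZBl j = {}"
      proof (cases "i < j")
        case True then show ?thesis using ij unfolding ZBl_def by auto
      next
        case False then show ?thesis using ij unfolding ZBl_def by auto
      qed
    qed
  qed (auto simp: finite_ZBl)
  also have "\<dots> = (\<Sum>l\<in>{p..<k}. (n-1)^(k-l))" by (rule sum.cong) (auto simp: card_ZBl)
  finally show ?thesis .
qed

lemma ZB_last: "b \<in> ZB \<Longrightarrow> b!(k-1) \<noteq> 0" unfolding ZB_def ZBl_def by auto

lemma ZA_last: "a \<in> ZA \<Longrightarrow> a!(k-1) = 0"
  unfolding ZA_def using vlast pk lv by (auto split: if_splits simp: nth_list_update)

lemma disj: "ZA \<inter> ZB = {}" using ZB_last ZA_last by blast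

lemma finite_N: "finite (ZA \<union> ZB)" using nbrs Hnbrs_HV finite_HV by (metis finite_subset)

lemma noadj: assumes a: "a \<in> ZA" and b: "b \<in> ZB" shows "\<not> Hadj n k a b"
proof
  assume h: "Hadj n k a b"
  obtain c where p0: "p \<noteq> 0" and c: "c \<in> {1..<n} - {v!(p-1)}" "a = v[p-1:=c]"
  proof -
    have "p \<noteq> 0" using a unfolding ZA_def by (auto split: if_splits)
    moreover then have "a \<in> (\<lambda>c. v[p-1:=c]) ` ({1..<n} - {v!(p-1)})" using a unfolding ZA_def by simp
    ultimately show ?thesis using that by blast
  qed
  have ap: "a!(p-1) = c" using c pk lv by simp
  have bp: "b!(p-1) = v!(p-1)" using b p0 unfolding ZB_def ZBl_def by auto
  have ak: "a!(k-1) = 0" using ZA_last a .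
  have bk: "b!(k-1) \<noteq> 0" using ZB_last b .
  from h have "R1n k a b \<or> R2n k a b \<or> R2n k b a \<or> R3n k a b" unfolding Hadj_nth by auto
  then show False
  proof (elim disjE)
    assume "R1n k a b"
    moreover have "p - 1 < k - 1" using p0 pk by auto
    ultimately have "a!(p-1) = b!(p-1)" unfolding R1n_def by blast
    then show False using ap bp c by auto
  next
    assume "R2n k a b"
    then obtain i where i: "i+2 \<le> k" "\<forall>j<i. a!j = b!j" "\<forall>j. i\<le>j \<longrightarrow> j<k \<longrightarrow> a!j = 0 \<and> b!j \<noteq> 0"
      unfolding R2n_def by auto
    show False
    proof (cases "p - 1 < i")
      case True then show False using i ap bp c by auto
    next
      case False then show False using i ap c pk by auto
    qed
  next
    assume "R2n k b a" then show False using ak R2n_last[of k b a] by auto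
  next
    assume "R3n k a b" then show False using bk R3n_last[of k a b] by auto
  qed
qed

lemma adjA: assumes a: "a \<in> ZA" shows "{b \<in> ZA \<union> ZB. Hadj n k a b} = ZA - {a}"
proof (rule set_eqI, rule iffI)
  fix b assume "b \<in> {b \<in> ZA \<union> ZB. Hadj n k a b}"
  then show "b \<in> ZA - {a}" using noadj a irr by auto
next
  fix b assume b: "b \<in> ZA - {a}"
  obtain c where p0: "p \<noteq> 0" and c: "c \<in> {1..<n} - {v!(p-1)}" "a = v[p-1:=c]"
  proof -
    have "p \<noteq> 0" using a unfolding ZA_def by (auto split: if_splits)
    moreover then have "a \<in> (\<lambda>c. v[p-1:=c]) ` ({1..<n} - {v!(p-1)})" using a unfolding ZA_def by simp
    ultimately show ?thesis using that by blast
  qed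
  have "b \<in> (\<lambda>c. v[p-1:=c]) ` ({1..<n} - {v!(p-1)})" using b p0 unfolding ZA_def by simp
  then obtain d where d: "d \<in> {1..<n} - {v!(p-1)}" "b = v[p-1:=d]" by blast
  have "c \<noteq> d" using b c d by auto
  have hv: "a \<in> HV n k" "b \<in> HV n k" using a b nbrs Hnbrs_HV[of n k v] by auto
  have "R3n k a b" unfolding R3n_def
    by (rule exI[of _ p]) (use p0 pk c d \<open>c\<noteq>d\<close> vz lv in \<open>auto simp: nth_list_update\<close>)
  then show "b \<in> {b \<in> ZA \<union> ZB. Hadj n k a b}" using b hv unfolding Hadj_nth by auto
qed

lemma adjB: assumes a: "a \<in> ZB"
  shows "{b \<in> ZA \<union> ZB. Hadj n k a b} = (\<lambda>y. a[k-1:=y]) ` ({1..<n} - {a!(k-1)})"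
proof -
  obtain l where l: "p \<le> l" "l < k" "a \<in> ZBl l" using a unfolding ZB_def by auto
  then have aHV: "a \<in> HV n k" and a1: "\<forall>j<p. a!j = v!j" and a2: "\<forall>j. p\<le>j \<longrightarrow> j<l \<longrightarrow> a!j = 0"
      and a3: "\<forall>j. l\<le>j \<longrightarrow> j<k \<longrightarrow> a!j \<noteq> 0" unfolding ZBl_def by auto
  have la: "length a = k" "\<And>j. j<k \<Longrightarrow> a!j < n" using aHV HV_nth by auto
  show ?thesis
  proof (rule set_eqI, rule iffI)
    fix b assume "b \<in> {b \<in> ZA \<union> ZB. Hadj n k a b}"
    then have b: "b \<in> ZA \<union> ZB" "Hadj n k a b" by auto
    have "b \<notin> ZA" using noadj a b Hadj_sym by blast
    then have "b \<in> ZB" using b by auto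
    then have bk: "b!(k-1) \<noteq> 0" using ZB_last by auto
    have ak: "a!(k-1) \<noteq> 0" using ZB_last a by auto
    have bHV: "length b = k" "\<And>j. j<k \<Longrightarrow> b!j < n" using b(2) HV_nth Hadj_nth by auto
    from b(2) have "R1n k a b \<or> R2n k a b \<or> R2n k b a \<or> R3n k a b" unfolding Hadj_nth by auto
    moreover have "\<not> R2n k a b" using ak R2n_last[of k a b] by auto
    moreover have "\<not> R2n k b a" using bk R2n_last[of k b a] by auto
    moreover have "\<not> R3n k a b" using bk R3n_last[of k a b] by auto
    ultimately have r: "R1n k a b" by auto
    have "b = a[k-1 := b!(k-1)]"
    proof (rule nth_equalityI)
      show "length b = length (a[k-1 := b!(k-1)])" using la bHV by simp
      fix j assume "j < length b"
      then show "b ! j = a[k-1 := b!(k-1)] ! j" using r la bHV unfolding R1n_def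
        by (cases "j = k-1") (auto simp: nth_list_update)
    qed
    moreover have "b!(k-1) \<in> {1..<n} - {a!(k-1)}" using r bk bHV pk unfolding R1n_def by auto
    ultimately show "b \<in> (\<lambda>y. a[k-1:=y]) ` ({1..<n} - {a!(k-1)})" by blast
  next
    fix b assume "b \<in> (\<lambda>y. a[k-1:=y]) ` ({1..<n} - {a!(k-1)})"
    then obtain y where y: "y \<in> {1..<n} - {a!(k-1)}" "b = a[k-1:=y]" by blast
    have nb: "\<And>j. j < k \<Longrightarrow> b!j = (if j = k-1 then y else a!j)" using y la by (auto simp: nth_list_update)
    have lb: "length b = k" using y la by simp
    have bHV: "b \<in> HV n k" unfolding HV_nth using lb nb la y by auto
    have "b \<in> ZBl l" unfolding ZBl_def using bHV nb a1 a2 a3 l y by auto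
    then have "b \<in> ZB" using l unfolding ZB_def by auto
    moreover have "a \<noteq> b" using nb[of "k-1"] y pk by auto
    moreover have "R1n k a b" unfolding R1n_def using nb y pk by auto
    ultimately show "b \<in> {b \<in> ZA \<union> ZB. Hadj n k a b}" using aHV bHV unfolding Hadj_nth by auto
  qed
qed

lemma card_adjB: assumes a: "a \<in> ZB" shows "card {b \<in> ZA \<union> ZB. Hadj n k a b} = n - 2"
proof -
  have "a \<in> HV n k" using a nbrs Hnbrs_HV[of n k v] by auto
  then have la: "length a = k" "\<And>j. j<k \<Longrightarrow> a!j < n" unfolding HV_nth by auto
  have inj: "inj_on (\<lambda>y. a[k-1:=y]) ({1..<n} - {a!(k-1)})"
  proof (rule inj_onI)
    fix x y assume "a[k-1:=x] = a[k-1:=y]"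
    then have "a[k-1:=x] ! (k-1) = a[k-1:=y] ! (k-1)" by simp
    then show "x = y" using pk la by simp
  qed
  have "a!(k-1) \<in> {1..<n}" using ZB_last[OF a] la pk by auto
  then have "card ({1..<n} - {a!(k-1)}) = n - 2" by simp
  then show ?thesis using adjB[OF a] inj by (simp add: card_image)
qed

lemma edges: "2 * Hnbr_edges n k v = card ZA * (n-3) + card ZB * (n-2)"
proof -
  have "2 * Hnbr_edges n k v = (\<Sum>a\<in>ZA \<union> ZB. card {b\<in>ZA \<union> ZB. Hadj n k a b})"
    unfolding Hnbr_edges_def nbrs
    by (rule edges_double) (use finite_N Hadj_sym irr in auto)
  also have "\<dots> = (\<Sum>a\<in>ZA. card {b\<in>ZA \<union> ZB. Hadj n k a b}) + (\<Sum>a\<in>ZB. card {b\<in>ZA \<union> ZB. Hadj n k a b})"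
    by (rule sum.union_disjoint) (use finite_N disj in auto)
  also have "(\<Sum>a\<in>ZA. card {b\<in>ZA \<union> ZB. Hadj n k a b}) = (\<Sum>a\<in>ZA. n - 3)"
  proof (rule sum.cong)
    fix a assume a: "a \<in> ZA"
    have "finite ZA" using finite_N by auto
    then have "card (ZA - {a}) = card ZA - 1" using a by simp
    moreover have "card ZA = n - 2" using a card_ZA by (auto simp: ZA_def split: if_splits)
    ultimately show "card {b\<in>ZA \<union> ZB. Hadj n k a b} = n - 3" using adjA[OF a] by simp
  qed simp
  also have "(\<Sum>a\<in>ZB. card {b\<in>ZA \<union> ZB. Hadj n k a b}) = (\<Sum>a\<in>ZB. n - 2)"
  proof (rule sum.cong)
    fix a assume "a \<in> ZB" then show "card {b\<in>ZA \<union> ZB. Hadj n k a b} = n - 2" by (rule card_adjB)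
  qed simp
  finally show ?thesis by simp
qed

lemma deg: "Hdeg n k v = card ZA + card ZB"
  unfolding Hdeg_def nbrs using finite_N disj by (simp add: card_Un_disjoint)

end


locale pv =
  fixes n k :: nat and v :: "nat list" and p :: nat
  assumes n3: "n \<ge> 3" and vHV: "v \<in> HV n k" and pk: "p < k"
    and pz: "p = 0 \<or> v!(p-1) = 0" and vnz: "\<And>j. p \<le> j \<Longrightarrow> j < k \<Longrightarrow> v!j \<noteq> 0"
begin

definition PR where "PR = (\<lambda>y. v[k-1:=y]) ` ({..<n} - {v!(k-1)})"
definition zz where "zz i = take i v @ replicate (k-i) 0"
definition PZ where "PZ = zz ` {p..<k-1}"
definition a0 where "a0 = v[k-1:=0]"

lemma lv: "length v = k" "\<And>j. j < k \<Longrightarrow> v!j < n"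
  using vHV HV_nth by auto

lemma vlast: "v!(k-1) \<noteq> 0" using vnz pk by auto

lemma nth_zz: "j < k \<Longrightarrow> i \<le> k \<Longrightarrow> zz i ! j = (if j<i then v!j else 0)"
  unfolding zz_def using lv by (auto simp: nth_append min_def)

lemma len_zz: "i \<le> k \<Longrightarrow> length (zz i) = k" unfolding zz_def using lv by simp

lemma zz_HV: "i \<le> k \<Longrightarrow> zz i \<in> HV n k"
  unfolding HV_nth using len_zz nth_zz lv n3 by auto

lemma upd_nth: "j < k \<Longrightarrow> v[k-1:=y] ! j = (if j = k-1 then y else v!j)"
  using lv pk by (auto simp: nth_list_update)

lemma upd_HV: "y < n \<Longrightarrow> v[k-1:=y] \<in> HV n k"
  unfolding HV_nth using upd_nth lv by auto

lemma nbrs: "Hnbrs n k v = PR \<union> PZ"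
proof (rule set_eqI, rule iffI)
  fix b assume "b \<in> Hnbrs n k v"
  then have bHV: "b \<in> HV n k" and ne: "v \<noteq> b" and rel: "R1n k v b \<or> R2n k v b \<or> R2n k b v \<or> R3n k v b"
    unfolding Hnbrs_def Hadj_nth by auto
  have lb: "length b = k" "\<And>j. j<k \<Longrightarrow> b!j < n" using bHV HV_nth by auto
  from rel show "b \<in> PR \<union> PZ"
  proof (elim disjE)
    assume r: "R1n k v b"
    have "b = v[k-1 := b!(k-1)]"
    proof (rule nth_equalityI)
      show "length b = length (v[k-1 := b!(k-1)])" using lb lv by simp
      fix j assume "j < length b"
      then show "b ! j = v[k-1 := b!(k-1)] ! j" using r lb upd_nth unfolding R1n_def
        by (cases "j = k-1") auto
    qed
    moreover have "b!(k-1) \<in> {..<n} - {v!(k-1)}" using r lb pk unfolding R1n_def by auto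
    ultimately show ?thesis unfolding PR_def by blast
  next
    assume "R2n k v b" then show ?thesis using R2n_last[of k v b] vlast by auto
  next
    assume "R2n k b v"
    then obtain i where i: "i+2 \<le> k" "\<forall>j<i. b!j = v!j" "\<forall>j. i\<le>j \<longrightarrow> j<k \<longrightarrow> b!j = 0 \<and> v!j \<noteq> 0"
      unfolding R2n_def by auto
    have "p \<le> i"
    proof (rule ccontr)
      assume "\<not> p \<le> i" then have "p \<noteq> 0" "i \<le> p-1" "p - 1 < k" using pk by auto
      then show False using i(3) pz by auto
    qed
    have "b = zz i" unfolding zz_def using eq_trunc[of b k v i] lb lv i by auto
    then show ?thesis unfolding PZ_def using \<open>p \<le> i\<close> i by auto
  next
    assume "R3n k v b" then show ?thesis using R3n_last[of k v b] vlast by auto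
  qed
next
  fix b assume "b \<in> PR \<union> PZ"
  then show "b \<in> Hnbrs n k v"
  proof
    assume "b \<in> PR"
    then obtain y where y: "y \<in> {..<n} - {v!(k-1)}" "b = v[k-1:=y]" unfolding PR_def by blast
    have bHV: "b \<in> HV n k" using y upd_HV by auto
    have "v \<noteq> b" using y upd_nth[of "k-1" y] pk by auto
    moreover have "R1n k v b" unfolding R1n_def using y upd_nth pk by auto
    ultimately show ?thesis unfolding Hnbrs_def Hadj_nth using bHV vHV by auto
  next
    assume "b \<in> PZ"
    then obtain i where i: "p \<le> i" "i < k-1" "b = zz i" unfolding PZ_def by auto
    have bHV: "b \<in> HV n k" using i zz_HV by auto
    have "b!(k-1) = 0" using i nth_zz[of "k-1" i] pk by auto
    then have "v \<noteq> b" using vlast by auto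
    moreover have "R2n k b v" unfolding R2n_def
      by (rule exI[of _ i]) (use i nth_zz vnz in auto)
    ultimately show ?thesis unfolding Hnbrs_def Hadj_nth using bHV vHV by auto
  qed
qed

lemma finite_N: "finite (PR \<union> PZ)" using nbrs Hnbrs_HV finite_HV by (metis finite_subset)

lemma card_PR: "card PR = n - 1"
proof -
  have inj: "inj_on (\<lambda>y. v[k-1:=y]) ({..<n} - {v!(k-1)})"
  proof (rule inj_onI)
    fix x y assume "v[k-1:=x] = v[k-1:=y]"
    then have "v[k-1:=x] ! (k-1) = v[k-1:=y] ! (k-1)" by simp
    then show "x = y" using pk lv by simp
  qed
  have "v!(k-1) \<in> {..<n}" using lv pk by auto
  then have "card ({..<n} - {v!(k-1)}) = n - 1" by simp
  then show ?thesis using inj unfolding PR_def by (simp add: card_image)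
qed

lemma card_PZ: "card PZ = k - 1 - p"
proof -
  have inj: "inj_on zz {p..<k-1}"
  proof (rule inj_onI)
    fix i i' assume ii: "i \<in> {p..<k-1}" "i' \<in> {p..<k-1}" "zz i = zz i'"
    show "i = i'"
    proof (rule ccontr)
      assume "i \<noteq> i'"
      then consider "i < i'" | "i' < i" by linarith
      then show False
      proof cases
        case 1
        have "zz i ! i = zz i' ! i" using ii by simp
        moreover have "i < k" "i' \<le> k" "i \<le> k" using ii 1 by auto
        ultimately show False using 1 ii nth_zz[of i i] nth_zz[of i i'] vnz[of i] by auto
      next
        case 2
        have "zz i ! i' = zz i' ! i'" using ii by simp
        moreover have "i' < k" "i' \<le> k" "i \<le> k" using ii 2 by auto
        ultimately show False using 2 ii nth_zz[of i' i] nth_zz[of i' i'] vnz[of i'] by auto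
      qed
    qed
  qed
  then show ?thesis unfolding PZ_def by (simp add: card_image)
qed

lemma PZ_facts: "b \<in> PZ \<Longrightarrow> k \<ge> 2 \<and> b!(k-1) = 0 \<and> b!(k-2) = 0 \<and> v!(k-2) \<noteq> 0"
proof -
  assume "b \<in> PZ"
  then obtain i where i: "p \<le> i" "i < k-1" "b = zz i" unfolding PZ_def by auto
  then show ?thesis using nth_zz[of "k-1" i] nth_zz[of "k-2" i] vnz[of "k-2"] by auto
qed

lemma disj: "PR \<inter> PZ = {}"
proof -
  { fix b assume b: "b \<in> PR" "b \<in> PZ"
    then obtain y where y: "b = v[k-1:=y]" unfolding PR_def by blast
    have "b!(k-2) = v!(k-2)" using y upd_nth[of "k-2" y] PZ_facts[OF b(2)] by auto
    then have False using PZ_facts[OF b(2)] by auto }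
  then show ?thesis by blast
qed

lemma a0_PR: "a0 \<in> PR" unfolding PR_def a0_def using vlast n3 by auto

lemma noadj0: assumes b: "b \<in> PZ" shows "\<not> Hadj n k a0 b"
proof
  assume h: "Hadj n k a0 b"
  have f: "k \<ge> 2" "b!(k-1) = 0" "b!(k-2) = 0" "v!(k-2) \<noteq> 0" using PZ_facts[OF b] by auto
  have a1: "a0!(k-1) = 0" "a0!(k-2) = v!(k-2)" unfolding a0_def using lv f by (auto simp: nth_list_update)
  from h have "R1n k a0 b \<or> R2n k a0 b \<or> R2n k b a0 \<or> R3n k a0 b" unfolding Hadj_nth by auto
  then show False
  proof (elim disjE)
    assume "R1n k a0 b" then show False unfolding R1n_def using a1 f by auto
  next
    assume "R2n k a0 b" then show False using R2n_last[of k a0 b] f by auto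
  next
    assume "R2n k b a0" then show False using R2n_last[of k b a0] a1 by auto
  next
    assume "R3n k a0 b"
    then obtain r where r: "1\<le>r" "r<k" "a0!(r-1) \<noteq> 0" "b!(r-1) \<noteq> 0" "\<forall>j. r\<le>j \<longrightarrow> j<k \<longrightarrow> a0!j = 0 \<and> b!j = 0"
      unfolding R3n_def by auto
    have "\<not> r \<le> k-2" using r(5) a1 f by force
    then have "r = k-1" using r by auto
    then show False using r(4) f by (metis Suc_1 diff_diff_left plus_1_eq_Suc)
  qed
qed

lemma noadjZ: assumes a: "a \<in> PZ" and b: "b \<in> PZ" shows "\<not> Hadj n k a b"
proof
  assume h: "Hadj n k a b"
  obtain i where i: "p \<le> i" "i < k-1" "a = zz i" using a unfolding PZ_def by auto
  obtain i' where i': "p \<le> i'" "i' < k-1" "b = zz i'" using b unfolding PZ_def by auto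
  have fa: "a!(k-1) = 0" and fb: "b!(k-1) = 0" using PZ_facts a b by auto
  from h have "R1n k a b \<or> R2n k a b \<or> R2n k b a \<or> R3n k a b" unfolding Hadj_nth by auto
  then show False
  proof (elim disjE)
    assume "R1n k a b" then show False unfolding R1n_def using fa fb by auto
  next
    assume "R2n k a b" then show False using R2n_last[of k a b] fb by auto
  next
    assume "R2n k b a" then show False using R2n_last[of k b a] fa by auto
  next
    assume "R3n k a b"
    then obtain r where r: "1\<le>r" "r<k" "a!(r-1) \<noteq> 0" "b!(r-1) \<noteq> 0" "a!(r-1) \<noteq> b!(r-1)"
      unfolding R3n_def by auto
    have "r - 1 < i" using r(3) nth_zz[of "r-1" i] i r(2) by (auto split: if_splits)
    moreover have "r - 1 < i'" using r(4) nth_zz[of "r-1" i'] i' r(2) by (auto split: if_splits)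
    ultimately show False using r(5) nth_zz[of "r-1" i] nth_zz[of "r-1" i'] i i' r(2) by auto
  qed
qed

lemma adjR: assumes a: "a \<in> PR" "a \<noteq> a0" and b: "b \<in> PZ" shows "Hadj n k b a"
proof -
  obtain y where y: "y \<in> {..<n} - {v!(k-1)}" "a = v[k-1:=y]" using a unfolding PR_def by blast
  have "y \<noteq> 0"
  proof
    assume "y = 0" then have "a = a0" using y unfolding a0_def by simp
    then show False using a by simp
  qed
  obtain i where i: "p \<le> i" "i < k-1" "b = zz i" using b unfolding PZ_def by auto
  have "R2n k b a" unfolding R2n_def
    by (rule exI[of _ i]) (use i nth_zz upd_nth y vnz \<open>y\<noteq>0\<close> in auto)
  moreover have "a \<in> HV n k" "b \<in> HV n k" using a b nbrs Hnbrs_HV[of n k v] by auto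
  moreover have "a \<noteq> b" using a b disj by auto
  ultimately show ?thesis unfolding Hadj_nth by auto
qed

lemma adjRR: assumes a: "a \<in> PR" and b: "b \<in> PR" "b \<noteq> a" shows "Hadj n k a b"
proof -
  obtain y where y: "y \<in> {..<n} - {v!(k-1)}" "a = v[k-1:=y]" using a unfolding PR_def by blast
  obtain y' where y': "y' \<in> {..<n} - {v!(k-1)}" "b = v[k-1:=y']" using b unfolding PR_def by blast
  have "R1n k a b" unfolding R1n_def using y y' b upd_nth pk by auto
  moreover have "a \<in> HV n k" "b \<in> HV n k" using a b nbrs Hnbrs_HV[of n k v] by auto
  ultimately show ?thesis unfolding Hadj_nth using b by auto
qed

lemma adj1: assumes a: "a \<in> PR" "a \<noteq> a0"
  shows "{b \<in> PR \<union> PZ. Hadj n k a b} = (PR - {a}) \<union> PZ"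
  using adjR[OF a] adjRR[OF a(1)] Hadj_sym irr a by blast

lemma adj0: "{b \<in> PR \<union> PZ. Hadj n k a0 b} = PR - {a0}"
  using adjRR[OF a0_PR] noadj0 irr by blast

lemma adjZ: assumes a: "a \<in> PZ" shows "{b \<in> PR \<union> PZ. Hadj n k a b} = PR - {a0}"
  using adjR a noadjZ noadj0 Hadj_sym irr by blast

lemma edges: "2 * Hnbr_edges n k v = (n-2)*(n-2+(k-1-p)) + (n-2) + (k-1-p)*(n-2)"
proof -
  define m where "m = n - 2"
  define q where "q = k - 1 - p"
  have fPR: "finite PR" and fPZ: "finite PZ" using finite_N by auto
  have cR: "card (PR - {a}) = m" if "a \<in> PR" for a using that card_PR fPR unfolding m_def by simp
  have cZ: "card PZ = q" using card_PZ unfolding q_def .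
  have "2 * Hnbr_edges n k v = (\<Sum>a\<in>PR \<union> PZ. card {b\<in>PR \<union> PZ. Hadj n k a b})"
    unfolding Hnbr_edges_def nbrs
    by (rule edges_double) (use finite_N Hadj_sym irr in auto)
  also have "\<dots> = (\<Sum>a\<in>PR. card {b\<in>PR \<union> PZ. Hadj n k a b}) + (\<Sum>a\<in>PZ. card {b\<in>PR \<union> PZ. Hadj n k a b})"
    by (rule sum.union_disjoint) (use finite_N disj in auto)
  also have "(\<Sum>a\<in>PR. card {b\<in>PR \<union> PZ. Hadj n k a b}) =
     card {b\<in>PR \<union> PZ. Hadj n k a0 b} + (\<Sum>a\<in>PR - {a0}. card {b\<in>PR \<union> PZ. Hadj n k a b})"
    using sum.remove[OF fPR a0_PR] by simp
  also have "(\<Sum>a\<in>PR - {a0}. card {b\<in>PR \<union> PZ. Hadj n k a b}) = (\<Sum>a\<in>PR - {a0}. m + q)"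
  proof (rule sum.cong)
    fix a assume a: "a \<in> PR - {a0}"
    then have "card {b\<in>PR \<union> PZ. Hadj n k a b} = card ((PR - {a}) \<union> PZ)" using adj1 by auto
    also have "\<dots> = card (PR - {a}) + card PZ" using fPR fPZ disj by (intro card_Un_disjoint) auto
    finally show "card {b\<in>PR \<union> PZ. Hadj n k a b} = m + q" using a cR cZ by auto
  qed simp
  also have "(\<Sum>a\<in>PZ. card {b\<in>PR \<union> PZ. Hadj n k a b}) = (\<Sum>a\<in>PZ. m)"
  proof (rule sum.cong)
    fix a assume a: "a \<in> PZ"
    then show "card {b\<in>PR \<union> PZ. Hadj n k a b} = m" using adjZ cR a0_PR by auto
  qed simp
  also have "card {b\<in>PR \<union> PZ. Hadj n k a0 b} = m" using adj0 cR a0_PR by auto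
  finally have "2 * Hnbr_edges n k v = m + card (PR - {a0}) * (m + q) + card PZ * m" by simp
  then show ?thesis unfolding m_def[symmetric] q_def[symmetric] using cR[OF a0_PR] cZ
    by (simp add: algebra_simps)
qed

lemma deg: "Hdeg n k v = (n - 1) + (k - 1 - p)"
  unfolding Hdeg_def nbrs using finite_N disj card_PR card_PZ by (simp add: card_Un_disjoint)

end


lemma geo_real: fixes x :: real
  shows "(x - 1) * (\<Sum>l\<in>{p..<p+d}. x^(p+d-l)) = x^(d+1) - x"
proof (induction d)
  case 0 then show ?case by simp
next
  case (Suc d)
  have "(\<Sum>l\<in>{p..<p+Suc d}. x^(p+Suc d-l)) = (\<Sum>l\<in>{p..<p+d}. x^(p+Suc d-l)) + x^(p + Suc d - (p+d))"
    by simp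
  also have "(\<Sum>l\<in>{p..<p+d}. x^(p+Suc d-l)) = x * (\<Sum>l\<in>{p..<p+d}. x^(p+d-l))"
    unfolding sum_distrib_left
  proof (rule sum.cong)
    fix l assume "l \<in> {p..<p+d}"
    then have "p + Suc d - l = Suc (p + d - l)" by auto
    then show "x^(p+Suc d-l) = x * x^(p+d-l)" by simp
  qed simp
  finally have "(\<Sum>l\<in>{p..<p+Suc d}. x^(p+Suc d-l)) = x * (\<Sum>l\<in>{p..<p+d}. x^(p+d-l)) + x" by simp
  then have "(x - 1) * (\<Sum>l\<in>{p..<p+Suc d}. x^(p+Suc d-l)) = x * ((x - 1) * (\<Sum>l\<in>{p..<p+d}. x^(p+d-l))) + (x-1)*x"
    by (simp add: algebra_simps)
  also have "\<dots> = x * (x^(d+1) - x) + (x-1)*x" using Suc by simp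
  also have "\<dots> = x^(Suc d+1) - x" by (simp add: algebra_simps)
  finally show ?case .
qed

lemma zsum: assumes "p < k" "n \<ge> 3"
  shows "(real n - 2) * real (\<Sum>l\<in>{p..<k}. (n-1)^(k-l)) = (real n - 1)^(k-p+1) - (real n - 1)"
proof -
  have k: "k = p + (k - p)" using assms by simp
  have "real (\<Sum>l\<in>{p..<k}. (n-1)^(k-l)) = (\<Sum>l\<in>{p..<k}. (real n - 1)^(k-l))"
    using assms by (simp add: of_nat_diff)
  also have "\<dots> = (\<Sum>l\<in>{p..<p+(k-p)}. (real n - 1)^(p+(k-p)-l))" using k by simp
  finally have e: "real (\<Sum>l\<in>{p..<k}. (n-1)^(k-l)) = (\<Sum>l\<in>{p..<p+(k-p)}. (real n - 1)^(p+(k-p)-l))" .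
  show ?thesis unfolding e using geo_real[of "real n - 1" p "k-p"] by (simp add: algebra_simps)
qed

lemma zsum_ge: assumes "p < k" "n \<ge> 3"
  shows "real (\<Sum>l\<in>{p..<k}. (n-1)^(k-l)) \<ge> real n - 1"
proof -
  have "(real n - 1)^(k-p+1) \<ge> (real n - 1)^2"
    using assms by (intro power_increasing) auto
  then have "(real n - 2) * real (\<Sum>l\<in>{p..<k}. (n-1)^(k-l)) \<ge> (real n - 2) * (real n - 1)"
    using zsum[OF assms] by (simp add: power2_eq_square algebra_simps)
  then show ?thesis using assms by (simp add: mult_le_cancel_left)
qed

lemma Zc: assumes z: "zv n k v p"
  shows "Hclust n k v = (real n - 2)^2 / ((real n - 1)^(k-p+1) + (if p = 0 then - (real n - 2) else (real n - 2)^2) - (real n - 1))"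
  proof -
    interpret zv n k v p by (rule z)
    have nr: "real n \<ge> 3" using n3 by simp
    define S where "S = real (card ZB)"
    have hS: "(real n - 2) * S = (real n - 1)^(k-p+1) - (real n - 1)"
      unfolding S_def card_ZB using zsum[OF pk n3] .
    have gS: "S \<ge> real n - 1" unfolding S_def card_ZB using zsum_ge[OF pk n3] .
    show ?thesis
    proof (cases "p = 0")
      case True
      have d: "real (Hdeg n k v) = S" unfolding deg S_def using card_ZA True by simp
      have e: "2 * real (Hnbr_edges n k v) = S * (real n - 2)"
      proof -
        have "real (2 * Hnbr_edges n k v) = real (card ZB * (n-2))" using edges card_ZA True by simp
        then show ?thesis unfolding S_def using n3 by (simp add: of_nat_diff)
      qed
      have D: "(real n - 1)^(k-p+1) + (if p = 0 then - (real n - 2) else (real n - 2)^2) - (real n - 1)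
           = (S - 1) * (real n - 2)" using True hS by (simp add: algebra_simps)
      have "S - 1 \<noteq> 0" "S \<noteq> 0" "real n - 2 \<noteq> 0" using gS nr by auto
      have l: "S * (real n - 2) / (S * (S - 1)) = (real n - 2) / (S - 1)" using \<open>S \<noteq> 0\<close> by simp
      have r: "(real n - 2)^2 / ((S-1)*(real n - 2)) = (real n-2)/(S-1)"
        using \<open>real n - 2 \<noteq> 0\<close> by (simp add: power2_eq_square)
      show ?thesis unfolding Hclust_def d e D using l r by simp
    next
      case False
      have d: "real (Hdeg n k v) = S + (real n - 2)" unfolding deg S_def using card_ZA False n3
        by (simp add: of_nat_diff)
      have e: "2 * real (Hnbr_edges n k v) = (real n - 2) * (real n - 3) + S * (real n - 2)"
      proof -
        have "real (2 * Hnbr_edges n k v) = real ((n-2) * (n-3) + card ZB * (n-2))" using edges card_ZA False by simp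
        then show ?thesis unfolding S_def using n3 by (simp add: of_nat_diff)
      qed
      have D: "(real n - 1)^(k-p+1) + (if p = 0 then - (real n - 2) else (real n - 2)^2) - (real n - 1)
           = (S + (real n - 2)) * (real n - 2)" using False hS by (simp add: algebra_simps power2_eq_square)
      define T where "T = S + (real n - 2)"
      have "T - 1 \<noteq> 0" "T \<noteq> 0" "real n - 2 \<noteq> 0" using gS nr unfolding T_def by auto
      have num: "(real n - 2) * (real n - 3) + S * (real n - 2) = (real n - 2) * (T - 1)"
        unfolding T_def by (simp add: algebra_simps)
      have l: "(real n - 2) * (T - 1) / (T * (T - 1)) = (real n - 2) / T" using \<open>T - 1 \<noteq> 0\<close> by simp
      have r: "(real n - 2)^2 / (T*(real n - 2)) = (real n-2)/T"
        using \<open>real n - 2 \<noteq> 0\<close> by (simp add: power2_eq_square)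
      show ?thesis unfolding Hclust_def d e D num T_def[symmetric] using l r by simp
    qed
  qed

lemma Pc: assumes z: "pv n k v p"
  shows "Hclust n k v = (real n - 2) * (real n + 2 * (real k - real p) - 3) /
       ((real n + real k - real p - 2) * (real n + real k - real p - 3))"
  proof -
    interpret pv n k v p by (rule z)
    have d: "real (Hdeg n k v) = real n + real k - real p - 2" unfolding deg using n3 pk
      by (simp add: of_nat_diff)
    have e: "2 * real (Hnbr_edges n k v) = (real n - 2) * (real n + 2 * (real k - real p) - 3)"
    proof -
      define m where "m = n - 2"
      define q where "q = k - 1 - p"
      have rm: "real m = real n - 2" unfolding m_def using n3 by (simp add: of_nat_diff)
      have rq: "real q = real k - 1 - real p" unfolding q_def using pk by (simp add: of_nat_diff)
      have "real (2 * Hnbr_edges n k v) = real (m*(m+q) + m + q*m)"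
        using edges unfolding m_def q_def by simp
      also have "\<dots> = real m * (real m + real q) + real m + real q * real m" by simp
      finally show ?thesis unfolding rm rq by (simp add: algebra_simps)
    qed
    show ?thesis unfolding Hclust_def d e by (simp add: algebra_simps)
  qed

theorem mainTheorem10:
  fixes n k :: nat
  assumes "n \<ge> 3" and "k \<ge> 1"
  shows
   "Hclust n k (replicate k 0) =
      (real n - 2)^2 / ((real n - 1)^(k+1) - 2 * real n + 3)
   \<and>
   (\<forall>i v. 1 \<le> i \<and> i \<le> k - 1 \<and> v \<in> HV n k \<and> v ! (i - 1) \<noteq> 0 \<and>
      (\<forall>j. i \<le> j \<and> j < k \<longrightarrow> v ! j = 0) \<longrightarrow>
      Hclust n k v = (real n - 2)^2 / ((real n - 1)^(k-i+1) + (real n - 1)^2 - 3 * real n + 4))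
   \<and>
   (\<forall>p. p \<in> HV n k \<and> (\<forall>j < k. p ! j \<noteq> 0) \<longrightarrow>
      Hclust n k p = ((real n - 1)^2 + (2 * real k - 3) * (real n - 1) + 2 - 2 * real k) /
                     ((real n + real k - 2) * (real n + real k - 3)))
   \<and>
   (\<forall>i p. 1 \<le> i \<and> i \<le> k - 1 \<and> p \<in> HV n k \<and> p ! (i - 1) = 0 \<and>
      (\<forall>j. i \<le> j \<and> j < k \<longrightarrow> p ! j \<noteq> 0) \<longrightarrow>
      Hclust n k p = ((real n - 1)^2 + (2 * real k - 2 * real i - 3) * (real n - 1) + 2 + 2 * real i - 2 * real k) /
                     ((real n + real k - real i - 2) * (real n + real k - real i - 3)))"
proof (intro conjI allI impI)
  have "zv n k (replicate k 0) 0"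
    by unfold_locales (use assms in \<open>auto simp: HV_def\<close>)
  from Zc[OF this]
  show "Hclust n k (replicate k 0) = (real n - 2)^2 / ((real n - 1)^(k+1) - 2 * real n + 3)"
    by (simp add: algebra_simps)
next
  fix i v assume h: "1 \<le> i \<and> i \<le> k - 1 \<and> v \<in> HV n k \<and> v ! (i - 1) \<noteq> 0 \<and>
      (\<forall>j. i \<le> j \<and> j < k \<longrightarrow> v ! j = 0)"
  have "zv n k v i" by unfold_locales (use assms h in auto)
  from Zc[OF this] h
  show "Hclust n k v = (real n - 2)^2 / ((real n - 1)^(k-i+1) + (real n - 1)^2 - 3 * real n + 4)"
    by (simp add: algebra_simps power2_eq_square)
next
  fix q assume h: "q \<in> HV n k \<and> (\<forall>j < k. q ! j \<noteq> 0)"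
  have "pv n k q 0" by unfold_locales (use assms h in auto)
  from Pc[OF this]
  show "Hclust n k q = ((real n - 1)^2 + (2 * real k - 3) * (real n - 1) + 2 - 2 * real k) /
                     ((real n + real k - 2) * (real n + real k - 3))"
    by (simp add: algebra_simps power2_eq_square)
next
  fix i q assume h: "1 \<le> i \<and> i \<le> k - 1 \<and> q \<in> HV n k \<and> q ! (i - 1) = 0 \<and>
      (\<forall>j. i \<le> j \<and> j < k \<longrightarrow> q ! j \<noteq> 0)"
  have "pv n k q i" by unfold_locales (use assms h in auto)
  from Pc[OF this]
  show "Hclust n k q = ((real n - 1)^2 + (2 * real k - 2 * real i - 3) * (real n - 1) + 2 + 2 * real i - 2 * real k) /
                     ((real n + real k - real i - 2) * (real n + real k - real i - 3))"
    by (simp add: algebra_simps power2_eq_square)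
qed


end
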